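(* Let $S$ be a finite set of training examples, each $i\in S$ having weight $w_i>0$ and label $y_i\in Y$, where $Y$ is a finite label set. Let $S$ be partitioned into a finite family $R$ of nonempty leaves, and let $A\subseteq S$ be the set of assessed (seen) examples. For a leaf $\rho\in R$ and $y\in Y$ write $Z_\rho=\sum_{i\in\rho}w_i$, $Z_\rho^y=\sum_{i\in\rho,\,y_i=y}w_i$, $Z_u(\rho)=\sum_{i\in\rho\cap A}w_i$, $Z_u^y(\rho)=\sum_{i\in\rho\cap A,\,y_i=y}w_i$, and let $Z_n=\sum_{i\in S}w_i$, $w=\sum_{i\in S\setminus A}w_i$, $w^y=\sum_{i\in S\setminus A,\,y_i=y}w_i$. Define \[ \epsilon_n := \sum_{\rho\in R}\frac{Z_\rho}{Z_n}\left(-\sum_{y\in Y}\frac{Z_\rho^y}{Z_\rho}\lg\frac{Z_\rho^y}{Z_\rho}\right),\qquad Z_u\epsilon_u(\rho) := -\sum_{y\in Y}Z_u^y(\rho)\lg\frac{Z_u^y(\rho)}{Z_u(\rho)}. \] Assume $Z_u^y(\rho)>0$ for every $\rho\in R$ and $y\in Y$. Then \[ \sum_{\rho\in R} Z_u\epsilon_u(\rho) \;\le\; Z_n\epsilon_n \;\le\; \sum_{\rho\in R}\left[Z_u\epsilon_u(\rho) + w\lg|Y| + \sum_{y\in Y}\bigl(Z_u^y(\rho)+w^y\bigr)\lg\frac{Z_u(\rho)+w}{Z_u^y(\rho)}\right]. \]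
   Context: $\lg$ is the base-2 logarithm with the convention $0\lg 0=0$. $\epsilon_n$ is the conditional label entropy of the leaves (the "error" term used for information-gain splitting), computed with all examples; $Z_u\epsilon_u(\rho)$ is the corresponding weighted entropy computed only on the seen examples of leaf $\rho$. *)

theory Defs
  imports Complex_Main "HOL-Library.Disjoint_Sets"
begin

definition lg :: "real \<Rightarrow> real" where "lg x = log 2 x"

definition plg :: "real \<Rightarrow> real" where
  "plg p = (if p = 0 then 0 else p * lg p)"

definition eps_n :: "'a set \<Rightarrow> 'a set set \<Rightarrow> ('a \<Rightarrow> real) \<Rightarrow> ('a \<Rightarrow> 'b) \<Rightarrow> 'b set \<Rightarrow> real" where
  "eps_n S R w lab Y =
     (\<Sum>\<rho>\<in>R. (sum w \<rho> / sum w S) *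
        (- (\<Sum>y\<in>Y. plg (sum w {i\<in>\<rho>. lab i = y} / sum w \<rho>))))"

definition Zu_eps_u :: "'a set \<Rightarrow> ('a \<Rightarrow> real) \<Rightarrow> ('a \<Rightarrow> 'b) \<Rightarrow> 'b set \<Rightarrow> 'a set \<Rightarrow> real" where
  "Zu_eps_u A w lab Y \<rho> =
     - (\<Sum>y\<in>Y. sum w {i\<in>\<rho> \<inter> A. lab i = y} *
          lg (sum w {i\<in>\<rho> \<inter> A. lab i = y} / sum w (\<rho> \<inter> A)))"

end

theory Submission
  imports Defs
begin


lemma lg_div: "0 < x \<Longrightarrow> 0 < y \<Longrightarrow> lg (x / y) = - lg (y / x)"
  unfolding lg_def by (simp add: log_divide)

lemma lg_le: "0 < x \<Longrightarrow> lg x \<le> (x - 1) / ln 2"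
  unfolding lg_def log_def using ln_le_minus_one[of x] by (simp add: divide_right_mono)

lemma lg_nonneg: "1 \<le> x \<Longrightarrow> 0 \<le> lg x"
  unfolding lg_def by simp

lemma lg_mono: "0 < x \<Longrightarrow> x \<le> y \<Longrightarrow> lg x \<le> lg y"
  unfolding lg_def by simp

lemma leaf_lower:
  fixes a b :: "'b \<Rightarrow> real"
  assumes fin: "finite Y" and apos: "\<forall>y\<in>Y. 0 < a y" and ab: "\<forall>y\<in>Y. a y \<le> b y"
    and Za: "Za = sum a Y" and Zb: "Zb = sum b Y"
  shows "(\<Sum>y\<in>Y. a y * lg (Za / a y)) \<le> (\<Sum>y\<in>Y. b y * lg (Zb / b y))"
proof (cases "Y = {}")
  case True then show ?thesis by simp
next
  case False
  have bpos: "\<forall>y\<in>Y. 0 < b y" using apos ab by force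
  have Zapos: "0 < Za" using Za apos False fin by (simp add: sum_pos)
  have Zbpos: "0 < Zb" using Zb bpos False fin by (simp add: sum_pos)
  have step: "a y * lg (Za / a y) - a y * lg (Zb / b y) \<le> (Za * b y / Zb - a y) / ln 2" if y: "y \<in> Y" for y
  proof -
    have pa: "0 < a y" and pb: "0 < b y" using apos bpos y by auto
    have "a y * lg (Za / a y) - a y * lg (Zb / b y) = a y * lg ((Za * b y) / (a y * Zb))"
      unfolding lg_def using pa pb Zapos Zbpos
      by (simp add: log_divide log_mult algebra_simps)
    also have "\<dots> \<le> a y * (((Za * b y) / (a y * Zb) - 1) / ln 2)"
      by (rule mult_left_mono[OF lg_le]) (use pa pb Zapos Zbpos in auto)
    also have "\<dots> = (Za * b y / Zb - a y) / ln 2" using pa Zbpos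
      by (simp add: field_simps)
    finally show ?thesis .
  qed
  have "(\<Sum>y\<in>Y. a y * lg (Za / a y)) - (\<Sum>y\<in>Y. a y * lg (Zb / b y))
      \<le> (\<Sum>y\<in>Y. (Za * b y / Zb - a y) / ln 2)"
    unfolding sum_subtractf[symmetric] by (rule sum_mono) (use step in auto)
  also have "\<dots> = (Za * Zb / Zb - Za) / ln 2"
    unfolding sum_divide_distrib[symmetric] sum_subtractf Za Zb
    by (simp add: sum_distrib_left[symmetric] sum_divide_distrib[symmetric])
  also have "\<dots> = 0" using Zbpos by simp
  finally have 1: "(\<Sum>y\<in>Y. a y * lg (Za / a y)) \<le> (\<Sum>y\<in>Y. a y * lg (Zb / b y))" by simp
  have "(\<Sum>y\<in>Y. a y * lg (Zb / b y)) \<le> (\<Sum>y\<in>Y. b y * lg (Zb / b y))"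
  proof (rule sum_mono)
    fix y assume y: "y \<in> Y"
    have "b y \<le> Zb" unfolding Zb using fin y bpos by (intro member_le_sum) auto
    then have "0 \<le> lg (Zb / b y)" using bpos y by (intro lg_nonneg) simp
    then show "a y * lg (Zb / b y) \<le> b y * lg (Zb / b y)" using ab y by (simp add: mult_right_mono)
  qed
  with 1 show ?thesis by linarith
qed

lemma leaf_upper:
  fixes a b V :: "'b \<Rightarrow> real"
  assumes fin: "finite Y" and apos: "\<forall>y\<in>Y. 0 < a y" and ab: "\<forall>y\<in>Y. a y \<le> b y"
    and Za: "Za = sum a Y" and Zb: "Zb = sum b Y"
    and bV: "\<forall>y\<in>Y. b y \<le> a y + V y" and ZW: "Zb \<le> Za + W"
  shows "(\<Sum>y\<in>Y. b y * lg (Zb / b y)) \<le> (\<Sum>y\<in>Y. (a y + V y) * lg ((Za + W) / a y))"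
proof (rule sum_mono)
  fix y assume y: "y \<in> Y"
  have pa: "0 < a y" and pb: "0 < b y" using apos ab y by force+
  have "b y \<le> Zb" unfolding Zb using fin y apos ab by (intro member_le_sum) force+
  then have "0 \<le> lg (Zb / b y)" using pb by (intro lg_nonneg) simp
  have "a y \<le> Za" unfolding Za using fin y apos by (intro member_le_sum) force+
  have "Zb / b y \<le> (Za + W) / a y"
    using ZW ab y pa pb \<open>b y \<le> Zb\<close> by (simp add: frac_le)
  then have l: "lg (Zb / b y) \<le> lg ((Za + W) / a y)" using pb \<open>b y \<le> Zb\<close>
    by (intro lg_mono) auto
  have "0 \<le> lg ((Za + W) / a y)" using \<open>0 \<le> lg (Zb / b y)\<close> l by linarith
  have "b y * lg (Zb / b y) \<le> b y * lg ((Za + W) / a y)" using l pb by (simp add: mult_left_mono)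
  also have "\<dots> \<le> (a y + V y) * lg ((Za + W) / a y)"
    using bV y \<open>0 \<le> lg ((Za + W) / a y)\<close> by (simp add: mult_right_mono)
  finally show "b y * lg (Zb / b y) \<le> (a y + V y) * lg ((Za + W) / a y)" .
qed



theorem mainTheorem4:
  fixes S A :: "'a set" and R :: "'a set set" and w :: "'a \<Rightarrow> real"
    and lab :: "'a \<Rightarrow> 'b" and Y :: "'b set"
  assumes "finite S" and "finite Y" and "finite R"
    and "\<forall>i\<in>S. w i > 0"
    and "\<forall>i\<in>S. lab i \<in> Y"
    and "partition_on S R"
    and "A \<subseteq> S"
    and "\<forall>\<rho>\<in>R. \<forall>y\<in>Y. sum w {i\<in>\<rho> \<inter> A. lab i = y} > 0"
  shows "(\<Sum>\<rho>\<in>R. Zu_eps_u A w lab Y \<rho>) \<le> sum w S * eps_n S R w lab Y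
    \<and> sum w S * eps_n S R w lab Y \<le>
      (\<Sum>\<rho>\<in>R. Zu_eps_u A w lab Y \<rho> + sum w (S - A) * lg (real (card Y))
         + (\<Sum>y\<in>Y. (sum w {i\<in>\<rho> \<inter> A. lab i = y} + sum w {i\<in>S - A. lab i = y})
              * lg ((sum w (\<rho> \<inter> A) + sum w (S - A)) / sum w {i\<in>\<rho> \<inter> A. lab i = y})))"
  
proof -
  define W where "W = sum w (S - A)"
  define a where "a \<rho> y = sum w {i\<in>\<rho> \<inter> A. lab i = y}" for \<rho> y
  define b where "b \<rho> y = sum w {i\<in>\<rho>. lab i = y}" for \<rho> y
  define V where "V y = sum w {i\<in>S - A. lab i = y}" for y
  note fS = assms(1) and fY = assms(2) and wpos = assms(4) and labY = assms(5)
  have Rsub: "\<rho> \<subseteq> S" "\<rho> \<noteq> {}" if "\<rho> \<in> R" for \<rho>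
    using assms(6) that unfolding partition_on_def by auto
  have W0: "0 \<le> W" unfolding W_def using wpos by (intro sum_nonneg) auto
  have leafeq: "Zu_eps_u A w lab Y \<rho> = (\<Sum>y\<in>Y. a \<rho> y * lg (sum w (\<rho> \<inter> A) / a \<rho> y))
      \<and> sum w \<rho> * (- (\<Sum>y\<in>Y. plg (sum w {i\<in>\<rho>. lab i = y} / sum w \<rho>)))
         = (\<Sum>y\<in>Y. b \<rho> y * lg (sum w \<rho> / b \<rho> y))
      \<and> (\<Sum>y\<in>Y. a \<rho> y * lg (sum w (\<rho> \<inter> A) / a \<rho> y))
           \<le> (\<Sum>y\<in>Y. b \<rho> y * lg (sum w \<rho> / b \<rho> y))
      \<and> (\<Sum>y\<in>Y. b \<rho> y * lg (sum w \<rho> / b \<rho> y))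
           \<le> (\<Sum>y\<in>Y. (a \<rho> y + V y) * lg ((sum w (\<rho> \<inter> A) + W) / a \<rho> y))
      \<and> 0 \<le> (\<Sum>y\<in>Y. a \<rho> y * lg (sum w (\<rho> \<inter> A) / a \<rho> y))" if r: "\<rho> \<in> R" for \<rho>
  proof -
    have fr: "finite \<rho>" using Rsub[OF r] fS finite_subset by blast
    have apos: "\<forall>y\<in>Y. 0 < a \<rho> y" using assms(8) r unfolding a_def by auto
    have ab: "\<forall>y\<in>Y. a \<rho> y \<le> b \<rho> y" unfolding a_def b_def
    proof
      fix y assume "y \<in> Y"
      have "\<forall>i\<in>\<rho>. 0 \<le> w i" using Rsub[OF r] wpos by (auto intro: less_imp_le)
      then show "sum w {i\<in>\<rho> \<inter> A. lab i = y} \<le> sum w {i\<in>\<rho>. lab i = y}"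
        using fr by (intro sum_mono2) auto
    qed
    have wnn: "\<forall>i\<in>S. 0 \<le> w i" using wpos by (auto intro: less_imp_le)
    have Za: "sum w (\<rho> \<inter> A) = sum (a \<rho>) Y" unfolding a_def
      by (rule sum.group[symmetric]) (use fr fY labY Rsub[OF r] in auto)
    have Zb: "sum w \<rho> = sum (b \<rho>) Y" unfolding b_def
      by (rule sum.group[symmetric]) (use fr fY labY Rsub[OF r] in auto)
    have bV: "\<forall>y\<in>Y. b \<rho> y \<le> a \<rho> y + V y"
    proof
      fix y assume y: "y \<in> Y"
      have eq: "{i\<in>\<rho>. lab i = y} = {i\<in>\<rho> \<inter> A. lab i = y} \<union> {i\<in>\<rho> - A. lab i = y}" by blast
      have "b \<rho> y = a \<rho> y + sum w {i\<in>\<rho> - A. lab i = y}"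
        unfolding a_def b_def eq by (rule sum.union_disjoint) (use fr in auto)
      also have "sum w {i\<in>\<rho> - A. lab i = y} \<le> V y" unfolding V_def
      proof (rule sum_mono2)
        show "finite {i \<in> S - A. lab i = y}" using fS by simp
        show "{i \<in> \<rho> - A. lab i = y} \<subseteq> {i \<in> S - A. lab i = y}" using Rsub[OF r] by blast
        show "0 \<le> w b" if "b \<in> {i \<in> S - A. lab i = y} - {i \<in> \<rho> - A. lab i = y}" for b using wnn that by blast
      qed
      finally show "b \<rho> y \<le> a \<rho> y + V y" by simp
    qed
    have ZW: "sum w \<rho> \<le> sum w (\<rho> \<inter> A) + W"
    proof -
      have eq: "\<rho> = (\<rho> \<inter> A) \<union> (\<rho> - A)" by blast
      have "sum w \<rho> = sum w ((\<rho> \<inter> A) \<union> (\<rho> - A))"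
        by (rule arg_cong[where f="sum w"]) blast
      also have "\<dots> = sum w (\<rho> \<inter> A) + sum w (\<rho> - A)"
        by (rule sum.union_disjoint) (use fr in auto)
      also have "sum w (\<rho> - A) \<le> W" unfolding W_def
      proof (rule sum_mono2)
        show "finite (S - A)" using fS by simp
        show "\<rho> - A \<subseteq> S - A" using Rsub[OF r] by blast
        show "0 \<le> w b" if "b \<in> (S - A) - (\<rho> - A)" for b using wnn that by blast
      qed
      finally show ?thesis by simp
    qed
    have aleZ: "a \<rho> y \<le> sum w (\<rho> \<inter> A)" if "y \<in> Y" for y
    proof -
      have "a \<rho> y \<le> sum (a \<rho>) Y"
      proof (rule member_le_sum)
        show "y \<in> Y" by fact
        show "finite Y" by fact
        show "0 \<le> a \<rho> x" if "x \<in> Y - {y}" for x using apos that by (auto intro: less_imp_le)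
      qed
      then show ?thesis using Za by simp
    qed
    have bleZ: "b \<rho> y \<le> sum w \<rho>" if "y \<in> Y" for y
    proof -
      have "b \<rho> y \<le> sum (b \<rho>) Y"
      proof (rule member_le_sum)
        show "y \<in> Y" by fact
        show "finite Y" by fact
        show "0 \<le> b \<rho> x" if "x \<in> Y - {y}" for x
        proof -
          have "0 < a \<rho> x" "a \<rho> x \<le> b \<rho> x" using apos ab that by auto
          then show ?thesis by linarith
        qed
      qed
      then show ?thesis using Zb by simp
    qed
    have e1: "Zu_eps_u A w lab Y \<rho> = (\<Sum>y\<in>Y. a \<rho> y * lg (sum w (\<rho> \<inter> A) / a \<rho> y))"
      unfolding Zu_eps_u_def sum_negf[symmetric] a_def[symmetric]
    proof (rule sum.cong)
      fix y assume y: "y \<in> Y"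
      have "0 < a \<rho> y" using apos y by auto
      moreover have "0 < sum w (\<rho> \<inter> A)" using aleZ[OF y] \<open>0 < a \<rho> y\<close> by linarith
      ultimately show "- (a \<rho> y * lg (a \<rho> y / sum w (\<rho> \<inter> A)))
          = a \<rho> y * lg (sum w (\<rho> \<inter> A) / a \<rho> y)" by (simp add: lg_div[of "a \<rho> y" "sum w (\<rho> \<inter> A)"])
    qed simp
    have e2: "sum w \<rho> * (- (\<Sum>y\<in>Y. plg (sum w {i\<in>\<rho>. lab i = y} / sum w \<rho>)))
         = (\<Sum>y\<in>Y. b \<rho> y * lg (sum w \<rho> / b \<rho> y))"
      unfolding sum_negf[symmetric] sum_distrib_left b_def[symmetric]
    proof (rule sum.cong)
      fix y assume y: "y \<in> Y"
      have "0 < a \<rho> y" "a \<rho> y \<le> b \<rho> y" using apos ab y by auto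
      then have bp: "0 < b \<rho> y" by linarith
      moreover have Zp: "0 < sum w \<rho>" using bleZ[OF y] bp by linarith
      ultimately show "sum w \<rho> * - plg (b \<rho> y / sum w \<rho>) = b \<rho> y * lg (sum w \<rho> / b \<rho> y)"
        unfolding plg_def by (simp add: lg_div[of "b \<rho> y" "sum w \<rho>"])
    qed simp
    have nn: "0 \<le> (\<Sum>y\<in>Y. a \<rho> y * lg (sum w (\<rho> \<inter> A) / a \<rho> y))"
    proof (rule sum_nonneg)
      fix y assume y: "y \<in> Y"
      have "0 < a \<rho> y" using apos y by auto
      then show "0 \<le> a \<rho> y * lg (sum w (\<rho> \<inter> A) / a \<rho> y)"
        using aleZ[OF y] by (intro mult_nonneg_nonneg lg_nonneg) auto
    qed
    show ?thesis
      using e1 e2 nn leaf_lower[OF fY apos ab Za Zb] leaf_upper[OF fY apos ab Za Zb bV ZW] by simp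
  qed
  have main: "sum w S * eps_n S R w lab Y
      = (\<Sum>\<rho>\<in>R. sum w \<rho> * (- (\<Sum>y\<in>Y. plg (sum w {i\<in>\<rho>. lab i = y} / sum w \<rho>))))"
  proof (cases "S = {}")
    case True
    then have "R = {}" using assms(6) partition_on_empty by auto
    then show ?thesis unfolding eps_n_def by simp
  next
    case False
    then have "0 < sum w S" using fS wpos by (intro sum_pos) auto
    then show ?thesis unfolding eps_n_def sum_distrib_left by (intro sum.cong) auto
  qed
  have lgY: "0 \<le> W * lg (real (card Y))"
  proof (cases "card Y = 0")
    case True then show ?thesis by (simp add: lg_def log_def)
  next
    case False then show ?thesis using W0 by (intro mult_nonneg_nonneg lg_nonneg) auto
  qed
  show ?thesis
    unfolding main W_def[symmetric] a_def[symmetric] V_def[symmetric]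
  proof
    show "(\<Sum>\<rho>\<in>R. Zu_eps_u A w lab Y \<rho>)
        \<le> (\<Sum>\<rho>\<in>R. sum w \<rho> * - (\<Sum>y\<in>Y. plg (sum w {i \<in> \<rho>. lab i = y} / sum w \<rho>)))"
      by (rule sum_mono) (use leafeq in auto)
    show "(\<Sum>\<rho>\<in>R. sum w \<rho> * - (\<Sum>y\<in>Y. plg (sum w {i \<in> \<rho>. lab i = y} / sum w \<rho>)))
        \<le> (\<Sum>\<rho>\<in>R. Zu_eps_u A w lab Y \<rho> + W * lg (real (card Y)) +
             (\<Sum>y\<in>Y. (a \<rho> y + V y) * lg ((sum w (\<rho> \<inter> A) + W) / a \<rho> y)))"
    proof (rule sum_mono)
      fix \<rho> assume r: "\<rho> \<in> R"
      from leafeq[OF r] lgY show "sum w \<rho> * - (\<Sum>y\<in>Y. plg (sum w {i \<in> \<rho>. lab i = y} / sum w \<rho>))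
        \<le> Zu_eps_u A w lab Y \<rho> + W * lg (real (card Y)) +
             (\<Sum>y\<in>Y. (a \<rho> y + V y) * lg ((sum w (\<rho> \<inter> A) + W) / a \<rho> y))" by linarith
    qed
  qed
qed

end
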